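(* For every positive integer $n$, the splitting graph $\mathrm{Spltg}(K_{1,n})$ of the star $K_{1,n}$ admits a signed product cordial labeling.
   Context: A graph $G$ is signed product cordial if there is a vertex labeling $\alpha: V(G)\to\{1,-1\}$ such that, with the induced edge labeling $\alpha^*(uv)=\alpha(u)\alpha(v)$, we have $|v_\alpha(-1)-v_\alpha(1)|\le 1$ and $|e_{\alpha^*}(-1)-e_{\alpha^*}(1)|\le 1$. Here $v_\alpha(x)$ is the number of vertices labeled $x$ and $e_{\alpha^*}(x)$ is the number of edges labeled $x$; such an $\alpha$ is called a signed product cordial labeling. The splitting graph $\mathrm{Spltg}(G)$ of a graph $G$ is obtained from $G$ by adding, for each vertex $v$ of $G$, a new vertex $v'$ made adjacent to exactly the neighbors of $v$ in $G$. The star $K_{1,n}$ has an apex vertex $v_0$ adjacent to $n$ pendant vertices $v_1,\dots,v_n$. *)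

theory Defs
  imports Main
begin

text \<open>A finite simple graph is represented as a pair (V, E) of a vertex set and a set of
edges, each edge being a two-element subset of V.\<close>

type_synonym 'a graph = "'a set \<times> 'a set set"

definition verts :: "'a graph \<Rightarrow> 'a set" where "verts G = fst G"
definition edges :: "'a graph \<Rightarrow> 'a set set" where "edges G = snd G"

definition star :: "nat \<Rightarrow> nat graph" where
  "star n = ({0..n}, {{0, i} | i. 1 \<le> i \<and> i \<le> n})"

text \<open>Splitting graph: original vertex v is (v, False); the new vertex v' is (v, True),
adjacent to exactly the neighbours of v in G.\<close>
definition spltg :: "'a graph \<Rightarrow> ('a \<times> bool) graph" where
  "spltg G = ((\<lambda>v. (v, False)) ` verts G \<union> (\<lambda>v. (v, True)) ` verts G,
     {{(u, False), (w, False)} | u w. {u, w} \<in> edges G} \<union>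
     {{(v, True), (w, False)} | v w. {v, w} \<in> edges G})"

definition edge_label :: "('a \<Rightarrow> int) \<Rightarrow> 'a set \<Rightarrow> int" where
  "edge_label \<alpha> e = (THE x. \<exists>u v. e = {u, v} \<and> u \<noteq> v \<and> x = \<alpha> u * \<alpha> v)"

definition signed_product_cordial_labeling :: "'a graph \<Rightarrow> ('a \<Rightarrow> int) \<Rightarrow> bool" where
  "signed_product_cordial_labeling G \<alpha> \<longleftrightarrow>
     (\<forall>v \<in> verts G. \<alpha> v \<in> {1, -1}) \<and>
     \<bar>int (card {v \<in> verts G. \<alpha> v = -1}) - int (card {v \<in> verts G. \<alpha> v = 1})\<bar> \<le> 1 \<and>
     \<bar>int (card {e \<in> edges G. edge_label \<alpha> e = -1}) - int (card {e \<in> edges G. edge_label \<alpha> e = 1})\<bar> \<le> 1"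

definition signed_product_cordial :: "'a graph \<Rightarrow> bool" where
  "signed_product_cordial G \<longleftrightarrow> (\<exists>\<alpha>. signed_product_cordial_labeling G \<alpha>)"

end

theory Submission
  imports Defs
begin

lemma card_diff_sum:
  fixes f :: "'a \<Rightarrow> int"
  assumes "finite S" "\<forall>x\<in>S. f x \<in> {1,-1}"
  shows "int (card {x\<in>S. f x = -1}) - int (card {x\<in>S. f x = 1}) = - (\<Sum>x\<in>S. f x)"
  using assms
proof (induction S rule: finite_induct)
  case empty then show ?case by simp
next
  case (insert a S)
  have fin1: "finite {x\<in>S. f x = -1}" "finite {x\<in>S. f x = 1}" using insert by auto
  have na: "a \<notin> {x\<in>S. f x = -1}" "a \<notin> {x\<in>S. f x = 1}" using insert by auto
  have IH: "int (card {x\<in>S. f x = -1}) - int (card {x\<in>S. f x = 1}) = - (\<Sum>x\<in>S. f x)"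
    using insert by auto
  have "f a = 1 \<or> f a = -1" using insert by auto
  then show ?case
  proof
    assume h: "f a = 1"
    have e1: "{x\<in>insert a S. f x = -1} = {x\<in>S. f x = -1}" using h by auto
    have e2: "{x\<in>insert a S. f x = 1} = insert a {x\<in>S. f x = 1}" using h by auto
    show ?thesis unfolding e1 e2 using IH fin1 na insert h by simp
  next
    assume h: "f a = -1"
    have e1: "{x\<in>insert a S. f x = -1} = insert a {x\<in>S. f x = -1}" using h by auto
    have e2: "{x\<in>insert a S. f x = 1} = {x\<in>S. f x = 1}" using h by auto
    show ?thesis unfolding e1 e2 using IH fin1 na insert h by simp
  qed
qed

lemma edge_label_pair:
  assumes "a \<noteq> b"
  shows "edge_label \<alpha> {a,b} = \<alpha> a * \<alpha> b"
  unfolding edge_label_def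
  by (rule the_equality) (use assms in \<open>auto simp: doubleton_eq_iff\<close>)

lemma alt_sum_eq: "(\<Sum>i=1..n. ((-1::int)^i)) = (if even n then 0 else -1)"
proof (induction n)
  case 0 then show ?case by simp
next
  case (Suc n)
  have "{1..Suc n} = insert (Suc n) {1..n}" by auto
  then have "(\<Sum>i=1..Suc n. ((-1::int)^i)) = (-1)^(Suc n) + (\<Sum>i=1..n. ((-1::int)^i))"
    by simp
  then show ?case using Suc by (cases "even n") auto
qed

lemma alt_sum: "(\<Sum>i=1..n. ((-1::int)^i)) \<in> {-1,0}"
  using alt_sum_eq[of n] by (cases "even n") simp_all

definition lab :: "nat \<times> bool \<Rightarrow> int" where
  "lab p = (if fst p = 0 then (if snd p then -1 else 1)
            else (if snd p then (-1)^(fst p) else - ((-1)^(fst p))))"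

lemma lab_pm: "lab p \<in> {1,-1}"
  unfolding lab_def by (cases "even (fst p)") auto

theorem theorem2p1:
  fixes n :: nat
  assumes "n \<ge> 1"
  shows "signed_product_cordial (spltg (star n))"
proof -
  define E1 where "E1 = (\<lambda>i. {(0::nat,False),(i,False)}) ` {1..n}"
  define E2 where "E2 = (\<lambda>i. {(0::nat,True),(i,False)}) ` {1..n}"
  define E3 where "E3 = (\<lambda>i. {(0::nat,False),(i,True)}) ` {1..n}"
  define V where "V = (\<lambda>v. (v, False)) ` {0..n} \<union> (\<lambda>v. (v, True)) ` {0..n}"
  have VV: "verts (spltg (star n)) = V"
    by (simp add: V_def spltg_def verts_def star_def)
  have EE: "edges (spltg (star n)) = E1 \<union> (E2 \<union> E3)"
    unfolding E1_def E2_def E3_def spltg_def edges_def star_def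
    by (auto simp: doubleton_eq_iff insert_commute) (blast+)
  have finV: "finite V" by (simp add: V_def)
  have finE: "finite (E1 \<union> (E2 \<union> E3))" by (simp add: E1_def E2_def E3_def)
  have sV: "(\<Sum>v\<in>V. lab v) = 0"
  proof -
    have "(\<Sum>v\<in>V. lab v) = (\<Sum>v\<in>(\<lambda>v. (v, False)) ` {0..n}. lab v) + (\<Sum>v\<in>(\<lambda>v. (v, True)) ` {0..n}. lab v)"
      unfolding V_def by (rule sum.union_disjoint) auto
    also have "\<dots> = (\<Sum>v\<in>{0..n}. lab (v,False)) + (\<Sum>v\<in>{0..n}. lab (v,True))"
      by (subst sum.reindex, simp add: inj_on_def)+ simp
    also have "\<dots> = (\<Sum>v\<in>{0..n}. lab (v,False) + lab (v,True))"
      by (simp add: sum.distrib)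
    also have "\<dots> = 0" by (rule sum.neutral) (simp add: lab_def)
    finally show ?thesis .
  qed
  have inj1: "inj_on (\<lambda>i. {(0::nat,False),(i,False)}) {1..n}"
    by (auto simp: inj_on_def doubleton_eq_iff)
  have inj2: "inj_on (\<lambda>i. {(0::nat,True),(i,False)}) {1..n}"
    by (auto simp: inj_on_def doubleton_eq_iff)
  have inj3: "inj_on (\<lambda>i. {(0::nat,False),(i,True)}) {1..n}"
    by (auto simp: inj_on_def doubleton_eq_iff)
  have p1: "\<And>i. i \<in> {1..n} \<Longrightarrow> edge_label lab {(0::nat,False),(i,False)} = - ((-1::int)^i)"
    by (subst edge_label_pair) (auto simp: lab_def)
  have p2: "\<And>i. i \<in> {1..n} \<Longrightarrow> edge_label lab {(0::nat,True),(i,False)} = ((-1::int)^i)"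
    by (subst edge_label_pair) (auto simp: lab_def)
  have p3: "\<And>i. i \<in> {1..n} \<Longrightarrow> edge_label lab {(0::nat,False),(i,True)} = ((-1::int)^i)"
    by (subst edge_label_pair) (auto simp: lab_def)
  have s1: "(\<Sum>e\<in>E1. edge_label lab e) = (\<Sum>i=1..n. - ((-1::int)^i))"
    unfolding E1_def sum.reindex[OF inj1] o_def by (rule sum.cong[OF refl p1])
  have s2: "(\<Sum>e\<in>E2. edge_label lab e) = (\<Sum>i=1..n. ((-1::int)^i))"
    unfolding E2_def sum.reindex[OF inj2] o_def by (rule sum.cong[OF refl p2])
  have s3: "(\<Sum>e\<in>E3. edge_label lab e) = (\<Sum>i=1..n. ((-1::int)^i))"
    unfolding E3_def sum.reindex[OF inj3] o_def by (rule sum.cong[OF refl p3])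
  have in2: "\<forall>e\<in>E2. (0,True) \<in> e" unfolding E2_def by auto
  have in3: "\<forall>e\<in>E3. (0,True) \<notin> e" unfolding E3_def by auto
  have d23: "E2 \<inter> E3 = {}" using in2 in3 by blast
  have d1: "E1 \<inter> (E2 \<union> E3) = {}" unfolding E1_def E2_def E3_def by (auto simp: doubleton_eq_iff)
  have sE: "(\<Sum>e\<in>E1 \<union> (E2 \<union> E3). edge_label lab e) = (\<Sum>i=1..n. ((-1::int)^i))"
  proof -
    have f1: "finite E1" "finite E2" "finite E3" by (simp_all add: E1_def E2_def E3_def)
    have "(\<Sum>e\<in>E1 \<union> (E2 \<union> E3). edge_label lab e) = (\<Sum>e\<in>E1. edge_label lab e) + ((\<Sum>e\<in>E2. edge_label lab e) + (\<Sum>e\<in>E3. edge_label lab e))"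
      using f1 d1 d23 by (simp add: sum.union_disjoint)
    then show ?thesis unfolding s1 s2 s3 by (simp add: sum_negf)
  qed
  have pm: "\<And>a b::int. a \<in> {1,-1} \<Longrightarrow> b \<in> {1,-1} \<Longrightarrow> a * b \<in> {1,-1}" by auto
  have elpm: "\<forall>e\<in>E1 \<union> (E2 \<union> E3). edge_label lab e \<in> {1,-1}"
  proof
    fix e assume "e \<in> E1 \<union> (E2 \<union> E3)"
    then obtain a b where "e = {a,b}" "a \<noteq> b"
      unfolding E1_def E2_def E3_def by auto
    then show "edge_label lab e \<in> {1,-1}" using pm[OF lab_pm lab_pm] by (simp add: edge_label_pair)
  qed
  have c1: "\<bar>int (card {v \<in> V. lab v = -1}) - int (card {v \<in> V. lab v = 1})\<bar> \<le> 1"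
    using card_diff_sum[OF finV, of lab] sV lab_pm by simp
  have c2: "\<bar>int (card {e \<in> E1 \<union> (E2 \<union> E3). edge_label lab e = -1}) - int (card {e \<in> E1 \<union> (E2 \<union> E3). edge_label lab e = 1})\<bar> \<le> 1"
    using card_diff_sum[OF finE elpm] sE alt_sum[of n] by auto
  have "signed_product_cordial_labeling (spltg (star n)) lab"
    unfolding signed_product_cordial_labeling_def VV EE
    using c1 c2 lab_pm by blast
  then show ?thesis unfolding signed_product_cordial_def by blast
qed
end
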